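(* Let $I$ be a finite set and $t$ a rooted tree with vertex set $I$. The interval $[\widehat{0},t]$ of the poset $\Pi_{\operatorname{NAP}}(I)$ is isomorphic to the poset $[t,\widehat{1}]_s$ of all sub-rooted trees of $t$ ordered by $\leq_s$.
   Context: $\Pi_{\operatorname{NAP}}(I)$ is the set of forests of rooted trees whose vertex set is exactly $I$ (each vertex labelled by an element of $I$). It is partially ordered as follows: $y$ covers $x$ iff $y$ is obtained from $x$ by adding an edge from the root of one component of $x$ to the root of another component of $x$ (the latter root remaining the root of the merged tree); $\leq$ is the reflexive–transitive closure. Its minimum $\widehat{0}$ is the forest of one-vertex trees; a rooted tree $t$ on $I$ is an element of $\Pi_{\operatorname{NAP}}(I)$. A sub-rooted tree of $t$ is the restriction of $t$ to a subset of vertices containing the root of $t$ and such that every vertex on the path from the root to a vertex of the subset is in the subset (a lower ideal of $t$ viewed as a poset with root as minimum). For rooted trees, $t\leq_s t'$ means $t'$ is a sub-rooted tree of $t$. $[t,\widehat{1}]_s$ denotes the set of sub-rooted trees of $t$ with the order $\leq_s$ (so $t$ is its minimum and the one-vertex tree on the root, $\widehat{1}$, is its maximum). *)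

theory Defs
  imports Main
begin

text \<open>A rooted forest on vertex set V is encoded by its set of edges E, where
  an edge (c, p) means that p is the parent of c.\<close>

definition rforest :: "'a set \<Rightarrow> ('a \<times> 'a) set \<Rightarrow> bool" where
  "rforest V E \<longleftrightarrow> E \<subseteq> V \<times> V
     \<and> (\<forall>a b c. (a, b) \<in> E \<longrightarrow> (a, c) \<in> E \<longrightarrow> b = c)
     \<and> acyclic E"

definition roots :: "'a set \<Rightarrow> ('a \<times> 'a) set \<Rightarrow> 'a set" where
  "roots V E = {v \<in> V. \<not> (\<exists>w. (v, w) \<in> E)}"

definition rtree :: "'a set \<Rightarrow> ('a \<times> 'a) set \<Rightarrow> bool" where
  "rtree V E \<longleftrightarrow> rforest V E \<and> (\<exists>r. roots V E = {r})"

text \<open>Covering relation of Pi_NAP(V): add an edge from the root r1 of one component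
  to the root r2 of another component; r2 remains the root of the merged tree.
  (Distinct roots lie in distinct components.)\<close>
definition nap_cover :: "'a set \<Rightarrow> ('a \<times> 'a) set \<Rightarrow> ('a \<times> 'a) set \<Rightarrow> bool" where
  "nap_cover V x y \<longleftrightarrow> (\<exists>r1 r2. r1 \<in> roots V x \<and> r2 \<in> roots V x \<and> r1 \<noteq> r2
     \<and> y = insert (r1, r2) x)"

definition nap_le :: "'a set \<Rightarrow> ('a \<times> 'a) set \<Rightarrow> ('a \<times> 'a) set \<Rightarrow> bool" where
  "nap_le V x y \<longleftrightarrow> rforest V x \<and> rforest V y \<and> (nap_cover V)\<^sup>*\<^sup>* x y"

text \<open>Minimum of Pi_NAP(V): the forest of one-vertex trees.\<close>
definition nap_zero :: "('a \<times> 'a) set" where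
  "nap_zero = {}"

definition subrooted :: "'a set \<times> ('a \<times> 'a) set \<Rightarrow> 'a set \<times> ('a \<times> 'a) set \<Rightarrow> bool" where
  "subrooted T' T \<longleftrightarrow> (case T' of (V', E') \<Rightarrow> case T of (V, E) \<Rightarrow>
     rtree V E \<and> V' \<subseteq> V \<and> (\<exists>r. roots V E = {r} \<and> r \<in> V')
     \<and> (\<forall>v w. v \<in> V' \<longrightarrow> (v, w) \<in> E \<longrightarrow> w \<in> V')
     \<and> E' = E \<inter> (V' \<times> V'))"

definition sub_le :: "'a set \<times> ('a \<times> 'a) set \<Rightarrow> 'a set \<times> ('a \<times> 'a) set \<Rightarrow> bool" where
  "sub_le T T' \<longleftrightarrow> subrooted T' T"

definition poset_iso :: "'b set \<Rightarrow> ('b \<Rightarrow> 'b \<Rightarrow> bool) \<Rightarrow> 'c set \<Rightarrow> ('c \<Rightarrow> 'c \<Rightarrow> bool) \<Rightarrow> bool" where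
  "poset_iso A le1 B le2 \<longleftrightarrow> (\<exists>f. bij_betw f A B
     \<and> (\<forall>x\<in>A. \<forall>y\<in>A. le1 x y \<longleftrightarrow> le2 (f x) (f y)))"

end

theory Submission
  imports Defs
begin

lemma nap_star_imp:
  "(nap_cover V)\<^sup>*\<^sup>* x y \<Longrightarrow> x \<subseteq> y \<and> (\<forall>a b c. (a,b) \<in> y - x \<longrightarrow> (b,c) \<notin> x)"
proof (induction rule: rtranclp_induct)
  case base
  then show ?case by simp
next
  case (step y z)
  then obtain r1 r2 where r: "r1 \<in> roots V y" "r2 \<in> roots V y" "z = insert (r1, r2) y"
    unfolding nap_cover_def by blast
  then show ?case using step.IH unfolding roots_def by blast
qed

lemma nap_star_if:
  assumes "finite (y - x)" "y \<subseteq> V \<times> V" "acyclic y"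
    "\<forall>a b c. (a,b) \<in> y \<longrightarrow> (a,c) \<in> y \<longrightarrow> b = c" "x \<subseteq> y"
    "\<forall>a b c. (a,b) \<in> y - x \<longrightarrow> (b,c) \<notin> x"
  shows "(nap_cover V)\<^sup>*\<^sup>* x y"
  using assms
proof (induction "card (y - x)" arbitrary: y)
  case 0
  then have "y - x = {}" by simp
  with 0 have "y = x" by blast
  then show ?case by simp
next
  case (Suc n y)
  have ne: "y - x \<noteq> {}" using Suc(2) by (metis card.empty nat.distinct(1))
  have "acyclic (y - x)" by (rule acyclic_subset[OF Suc(5)]) blast
  then have wf: "wf ((y - x)\<inverse>)" using Suc(3) finite_acyclic_wf_converse by blast
  obtain b0 where "b0 \<in> Range (y - x)" using ne by auto
  from wf_eq_minimal[THEN iffD1, OF wf, rule_format, OF this]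
  obtain b where b: "b \<in> Range (y - x)" and bmin: "\<forall>c. (c, b) \<in> (y - x)\<inverse> \<longrightarrow> c \<notin> Range (y - x)"
    by blast
  have bno: "\<forall>c. (b, c) \<notin> y" using bmin Suc(8) b by blast
  obtain a where ab: "(a, b) \<in> y - x" using b by auto
  define y' where "y' = y - {(a, b)}"
  have "(nap_cover V)\<^sup>*\<^sup>* x y'"
  proof (rule Suc(1))
    have "y' - x = (y - x) - {(a, b)}" unfolding y'_def by blast
    then have "card (y' - x) = card (y - x) - 1" by (simp only: card_Diff_singleton[OF ab])
    then show "n = card (y' - x)" using Suc(2) by simp
    show "finite (y' - x)" by (rule finite_subset[OF _ Suc(3)]) (auto simp: y'_def)
    show "y' \<subseteq> V \<times> V" using Suc(4) unfolding y'_def by auto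
    show "acyclic y'" using Suc(5) acyclic_subset unfolding y'_def by blast
    show "\<forall>a b c. (a,b) \<in> y' \<longrightarrow> (a,c) \<in> y' \<longrightarrow> b = c" using Suc(6) unfolding y'_def by blast
    show "x \<subseteq> y'" using Suc(7) ab unfolding y'_def by blast
    show "\<forall>a b c. (a,b) \<in> y' - x \<longrightarrow> (b,c) \<notin> x" using Suc(8) unfolding y'_def by blast
  qed
  moreover have "nap_cover V y' y"
    unfolding nap_cover_def
  proof (intro exI conjI)
    show "a \<in> roots V y'" using ab Suc(4) Suc(6) unfolding roots_def y'_def by blast
    show "b \<in> roots V y'" using ab Suc(4) bno unfolding roots_def y'_def by blast
    show "a \<noteq> b" using ab Suc(5) unfolding acyclic_def by blast
    show "y = insert (a, b) y'" using ab unfolding y'_def by blast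
  qed
  ultimately show ?case by (rule rtranclp.rtrancl_into_rtrancl)
qed

theorem proposition6p1:
  fixes I :: "'a set" and t :: "('a \<times> 'a) set"
  assumes "finite I" and "rtree I t"
  shows "poset_iso {x. nap_le I nap_zero x \<and> nap_le I x t} (nap_le I)
                   {s. subrooted s (I, t)} sub_le"
proof -
  obtain r where rr: "roots I t = {r}" using assms(2) unfolding rtree_def by blast
  have tsub: "t \<subseteq> I \<times> I" and tfun: "\<forall>a b c. (a,b) \<in> t \<longrightarrow> (a,c) \<in> t \<longrightarrow> b = c"
    and tacy: "acyclic t"
    using assms(2) unfolding rtree_def rforest_def by auto
  have rI: "r \<in> I" and rno: "\<forall>w. (r, w) \<notin> t" using rr unfolding roots_def by auto
  have par: "\<And>v. v \<in> I \<Longrightarrow> v \<noteq> r \<Longrightarrow> \<exists>w. (v, w) \<in> t"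
    using rr unfolding roots_def by blast
  have fin: "\<And>x. finite (t - x)"
    using assms(1) tsub by (meson finite_Diff finite_SigmaI finite_subset)
  define good where "good x \<longleftrightarrow> x \<subseteq> t \<and> (\<forall>a b c. (a,b) \<in> t - x \<longrightarrow> (b,c) \<notin> x)" for x
  have forest_sub: "\<And>x. x \<subseteq> t \<Longrightarrow> rforest I x"
    unfolding rforest_def using tsub tfun tacy acyclic_subset by blast
  have A_eq: "{x. nap_le I nap_zero x \<and> nap_le I x t} = {x. good x}"
  proof (intro set_eqI iffI; simp)
    fix x assume "nap_le I nap_zero x \<and> nap_le I x t"
    then show "good x" unfolding nap_le_def good_def using nap_star_imp by blast
  next
    fix x assume g: "good x"
    then have fx: "rforest I x" using forest_sub good_def by blast
    have ft: "rforest I t" using assms(2) rtree_def by blast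
    have "(nap_cover I)\<^sup>*\<^sup>* {} x"
      apply (rule nap_star_if[where V=I])
      using fx g fin[of "{}"] unfolding rforest_def good_def
      by (auto intro: finite_subset)
    moreover have "(nap_cover I)\<^sup>*\<^sup>* x t"
      apply (rule nap_star_if[where V=I])
      using g fin tsub tacy tfun unfolding good_def by auto
    ultimately show "nap_le I nap_zero x \<and> nap_le I x t"
      unfolding nap_le_def nap_zero_def using fx ft forest_sub by auto
  qed
  define closed where "closed V' \<longleftrightarrow> V' \<subseteq> I \<and> r \<in> V' \<and> (\<forall>v w. v \<in> V' \<longrightarrow> (v, w) \<in> t \<longrightarrow> w \<in> V')" for V'
  have B_eq: "{s. subrooted s (I, t)} = (\<lambda>V'. (V', t \<inter> (V' \<times> V'))) ` {V'. closed V'}"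
    unfolding subrooted_def closed_def using assms(2) rr by (auto simp: image_iff)
  define g where "g x = insert r (Domain (t - x))" for x
  define f where "f x = (g x, t \<inter> (g x \<times> g x))" for x
  have g_good: "good x \<Longrightarrow> t - g x \<times> g x = x" for x
  proof
    assume gx: "good x"
    show "t - g x \<times> g x \<subseteq> x"
    proof
      fix p assume p: "p \<in> t - g x \<times> g x"
      obtain a b where pab: "p = (a,b)" by force
      show "p \<in> x"
      proof (rule ccontr)
        assume "p \<notin> x"
        then have ain: "a \<in> g x" using p pab unfolding g_def by auto
        have "b \<in> g x"
        proof (cases "b = r")
          case True then show ?thesis unfolding g_def by simp
        next
          case False
          have "b \<in> I" using p pab tsub by auto
          then obtain c where "(b,c) \<in> t" using par False by blast
          moreover have "(b,c) \<notin> x" using gx \<open>p \<notin> x\<close> p pab unfolding good_def by blast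
          ultimately show ?thesis unfolding g_def by auto
        qed
        then show False using ain p pab by auto
      qed
    qed
    show "x \<subseteq> t - g x \<times> g x"
    proof
      fix p assume p: "p \<in> x"
      obtain a b where pab: "p = (a,b)" by force
      have "p \<in> t" using gx p unfolding good_def by auto
      have "a \<noteq> r" using rno \<open>p \<in> t\<close> pab by auto
      moreover have "a \<notin> Domain (t - x)" using tfun p pab \<open>p \<in> t\<close> by blast
      ultimately show "p \<in> t - g x \<times> g x" using \<open>p \<in> t\<close> pab unfolding g_def by auto
    qed
  qed
  have g_closed: "good x \<Longrightarrow> closed (g x)" for x
  proof -
    assume gx: "good x"
    have "g x \<subseteq> I" using rI tsub unfolding g_def by auto
    moreover have "\<forall>v w. v \<in> g x \<longrightarrow> (v, w) \<in> t \<longrightarrow> w \<in> g x"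
    proof (intro allI impI)
      fix v w assume v: "v \<in> g x" and vw: "(v, w) \<in> t"
      have "v \<noteq> r" using rno vw by auto
      then obtain c where vc: "(v,c) \<in> t - x" using v unfolding g_def by auto
      then have "c = w" using tfun vw by blast
      show "w \<in> g x"
      proof (cases "w = r")
        case True then show ?thesis unfolding g_def by simp
      next
        case False
        have "w \<in> I" using vw tsub by auto
        then obtain u where "(w,u) \<in> t" using par False by blast
        moreover have "(w,u) \<notin> x" using gx vc \<open>c = w\<close> unfolding good_def by blast
        ultimately show ?thesis unfolding g_def by auto
      qed
    qed
    ultimately show "closed (g x)" unfolding closed_def g_def by auto
  qed
  have closed_g: "closed V' \<Longrightarrow> g (t - V' \<times> V') = V'" for V'
  proof -
    assume c: "closed V'"
    have "t - (t - V' \<times> V') = t \<inter> V' \<times> V'" by auto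
    then have "g (t - V' \<times> V') = insert r (Domain (t \<inter> V' \<times> V'))" unfolding g_def by simp
    also have "\<dots> = V'"
    proof
      show "insert r (Domain (t \<inter> V' \<times> V')) \<subseteq> V'" using c unfolding closed_def by auto
      show "V' \<subseteq> insert r (Domain (t \<inter> V' \<times> V'))"
      proof
        fix v assume v: "v \<in> V'"
        show "v \<in> insert r (Domain (t \<inter> V' \<times> V'))"
        proof (cases "v = r")
          case False
          then obtain w where "(v,w) \<in> t" using par v c unfolding closed_def by blast
          then show ?thesis using c v unfolding closed_def by blast
        qed simp
      qed
    qed
    finally show ?thesis .
  qed
  have closed_good: "closed V' \<Longrightarrow> good (t - V' \<times> V')" for V'
    unfolding good_def closed_def by blast
  have closed_rtree: "closed V' \<Longrightarrow> rtree V' (t \<inter> V' \<times> V') \<and> roots V' (t \<inter> V' \<times> V') = {r}" for V'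
  proof -
    assume c: "closed V'"
    have "rforest V' (t \<inter> V' \<times> V')"
      unfolding rforest_def using tfun tacy acyclic_subset by blast
    moreover have "roots V' (t \<inter> V' \<times> V') = {r}"
    proof
      show "roots V' (t \<inter> V' \<times> V') \<subseteq> {r}"
      proof
        fix v assume v: "v \<in> roots V' (t \<inter> V' \<times> V')"
        show "v \<in> {r}"
        proof (rule ccontr)
          assume "v \<notin> {r}"
          then obtain w where "(v,w) \<in> t" using par v c unfolding closed_def roots_def by blast
          then show False using c v unfolding closed_def roots_def by blast
        qed
      qed
      show "{r} \<subseteq> roots V' (t \<inter> V' \<times> V')" using c rno unfolding closed_def roots_def by auto
    qed
    ultimately show ?thesis unfolding rtree_def by blast
  qed
  have bij: "bij_betw f {x. good x} {s. subrooted s (I, t)}"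
    unfolding B_eq
  proof (rule bij_betw_byWitness[where f'="\<lambda>s. t - fst s \<times> fst s"])
    show "\<forall>a\<in>{x. good x}. t - fst (f a) \<times> fst (f a) = a" using g_good unfolding f_def by auto
    show "\<forall>a'\<in>(\<lambda>V'. (V', t \<inter> V' \<times> V')) ` {V'. closed V'}. f (t - fst a' \<times> fst a') = a'"
      using closed_g unfolding f_def by auto
    show "f ` {x. good x} \<subseteq> (\<lambda>V'. (V', t \<inter> V' \<times> V')) ` {V'. closed V'}"
      using g_closed unfolding f_def by auto
    show "(\<lambda>s. t - fst s \<times> fst s) ` (\<lambda>V'. (V', t \<inter> V' \<times> V')) ` {V'. closed V'} \<subseteq> {x. good x}"
      using closed_good by auto
  qed
  have ord: "nap_le I x y \<longleftrightarrow> sub_le (f x) (f y)" if gx: "good x" and gy: "good y" for x y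
  proof -
    have "nap_le I x y \<longleftrightarrow> x \<subseteq> y"
    proof
      assume "nap_le I x y" then show "x \<subseteq> y" unfolding nap_le_def using nap_star_imp by blast
    next
      assume xy: "x \<subseteq> y"
      have fy: "rforest I y" using gy forest_sub good_def by blast
      have "(nap_cover I)\<^sup>*\<^sup>* x y"
        apply (rule nap_star_if[where V=I])
        using fy xy gx gy fin[of "{}"] unfolding rforest_def good_def
        by (auto intro: finite_subset)
      then show "nap_le I x y" unfolding nap_le_def using fy forest_sub gx good_def by blast
    qed
    also have "\<dots> \<longleftrightarrow> g y \<subseteq> g x"
    proof
      assume "x \<subseteq> y" then show "g y \<subseteq> g x" unfolding g_def by blast
    next
      assume "g y \<subseteq> g x"
      then have "t - g x \<times> g x \<subseteq> t - g y \<times> g y" by blast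
      then show "x \<subseteq> y" using g_good gx gy by simp
    qed
    also have "\<dots> \<longleftrightarrow> sub_le (f x) (f y)"
    proof -
      have cx: "closed (g x)" and cy: "closed (g y)" using g_closed gx gy by auto
      show ?thesis
        unfolding sub_le_def subrooted_def f_def
        using closed_rtree[OF cx] cx cy unfolding closed_def by auto
    qed
    finally show ?thesis .
  qed
  show ?thesis unfolding poset_iso_def A_eq using bij ord by blast
qed

end
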